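(* Let $\Omega\subset\mathbb{R}$ be a bounded interval, let $g:\Omega\times\mathbb{R}^+\to\mathbb{R}$ be given, and for $\varepsilon>0$ let $(v,u)=(v_\varepsilon,u_\varepsilon)$ be a pair of smooth functions solving $$v_t-u_x=0,\qquad u_t-\tfrac{1}{\varepsilon^2}v_x=g(x,t)\qquad\text{on }\Omega\times\mathbb{R}^+,$$ with boundary condition $v(x,t)=0$ for all $(x,t)\in\partial\Omega\times\mathbb{R}^+$. Suppose $(v,u)$ admits a two-scale expansion $$v=v^{(0)}+\varepsilon v^{(1)}+\varepsilon^2v^{(2)}+O(\varepsilon^3),\qquad u=u^{(0)}+\varepsilon u^{(1)}+\varepsilon^2u^{(2)}+O(\varepsilon^3),$$ with smooth coefficient functions $v^{(k)},u^{(k)}$ independent of $\varepsilon$, in the sense that $\|v-v^{(0)}-\varepsilon v^{(1)}-\varepsilon^2v^{(2)}\|_{C^1}=O(\varepsilon^3)$ and $\|u-u^{(0)}-\varepsilon u^{(1)}-\varepsilon^2u^{(2)}\|_{C^1}=O(\varepsilon^3)$. Then necessarily $$v(x,t)=\varepsilon^2v^{(2)}(x,t)+O(\varepsilon^3),\qquad u(x,t)=u^{(0)}(t)+\varepsilon u^{(1)}(t)+\varepsilon^2u^{(2)}(x,t)+O(\varepsilon^3),$$ i.e. $v^{(0)}=v^{(1)}=0$ and $u^{(0)},u^{(1)}$ depend only on $t$.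
   Context: $\|\varphi\|_{C^1}:=\|\varphi\|_\infty+\|\nabla_{x,t}\varphi\|_\infty$ on $\Omega\times\mathbb{R}^+$; $O(\varepsilon^3)$ denotes a quantity bounded by a constant times $\varepsilon^3$ as $\varepsilon\to0$. *)

theory Defs
  imports "HOL-Analysis.Analysis"
begin

definition px :: "(real \<times> real \<Rightarrow> real) \<Rightarrow> real \<times> real \<Rightarrow> real" where
  "px f p = deriv (\<lambda>y. f (y, snd p)) (fst p)"

definition pt :: "(real \<times> real \<Rightarrow> real) \<Rightarrow> real \<times> real \<Rightarrow> real" where
  "pt f p = deriv (\<lambda>s. f (fst p, s)) (snd p)"

fun Ck_on :: "nat \<Rightarrow> (real \<times> real) set \<Rightarrow> (real \<times> real \<Rightarrow> real) \<Rightarrow> bool" where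
  "Ck_on 0 S f = continuous_on S f"
| "Ck_on (Suc n) S f = ((\<forall>p\<in>S. f differentiable (at p)) \<and> continuous_on S f \<and>
      Ck_on n S (px f) \<and> Ck_on n S (pt f))"

definition smooth_on :: "(real \<times> real) set \<Rightarrow> (real \<times> real \<Rightarrow> real) \<Rightarrow> bool" where
  "smooth_on S f = (\<forall>n. Ck_on n S f)"

definition grad_norm :: "(real \<times> real \<Rightarrow> real) \<Rightarrow> real \<times> real \<Rightarrow> real" where
  "grad_norm f p = sqrt ((px f p)\<^sup>2 + (pt f p)\<^sup>2)"

text \<open>For a family e indexed by \<epsilon>>0: the C^1 norm
  sup_S |e \<epsilon>| + sup_S |\<nabla> e \<epsilon>| is O(\<epsilon>^3) as \<epsilon> \<rightarrow> 0 (written out: both sups bounded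
  by C \<epsilon>^3 for all small \<epsilon>, which is equivalent up to the constant).\<close>
definition C1_O3 :: "(real \<times> real) set \<Rightarrow> (real \<Rightarrow> real \<times> real \<Rightarrow> real) \<Rightarrow> bool" where
  "C1_O3 S e = (\<exists>C \<epsilon>0. \<epsilon>0 > 0 \<and> (\<forall>\<epsilon>. 0 < \<epsilon> \<and> \<epsilon> < \<epsilon>0 \<longrightarrow>
      (\<forall>p\<in>S. \<bar>e \<epsilon> p\<bar> \<le> C * \<epsilon>^3 \<and> grad_norm (e \<epsilon>) p \<le> C * \<epsilon>^3)))"

end

theory Submission imports Defs begin


lemma px_has: assumes "f differentiable (at p)"
  shows "((\<lambda>y. f (y, snd p)) has_real_derivative px f p) (at (fst p))"
proof -
  have "(\<lambda>y. f (y, snd p)) differentiable (at (fst p))"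
  proof -
    have d1: "(\<lambda>y. (y, snd p)) differentiable (at (fst p))" by (auto intro!: derivative_intros)
    have "f differentiable (at ((\<lambda>y. (y, snd p)) (fst p)))" using assms by simp
    from differentiable_compose[OF this d1] show ?thesis by (simp add: o_def)
  qed
  thus ?thesis unfolding px_def using DERIV_deriv_iff_real_differentiable by blast
qed

lemma pt_has: assumes "f differentiable (at p)"
  shows "((\<lambda>s. f (fst p, s)) has_real_derivative pt f p) (at (snd p))"
proof -
  have "(\<lambda>s. f (fst p, s)) differentiable (at (snd p))"
  proof -
    have d1: "(\<lambda>s. (fst p, s)) differentiable (at (snd p))" by (auto intro!: derivative_intros)
    have "f differentiable (at ((\<lambda>s. (fst p, s)) (snd p)))" using assms by simp
    from differentiable_compose[OF this d1] show ?thesis by (simp add: o_def)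
  qed
  thus ?thesis unfolding pt_def using DERIV_deriv_iff_real_differentiable by blast
qed

lemma px_lin: assumes "f differentiable (at p)" "g differentiable (at p)" "h differentiable (at p)" "k differentiable (at p)"
  shows "px (\<lambda>q. f q - g q - c * h q - d * k q) p = px f p - px g p - c * px h p - d * px k p"
  unfolding px_def[of "\<lambda>q. f q - g q - c * h q - d * k q"]
  by (intro DERIV_imp_deriv derivative_intros px_has[OF assms(1), simplified] px_has[OF assms(2), simplified]
     DERIV_cmult[OF px_has[OF assms(3), simplified]] DERIV_cmult[OF px_has[OF assms(4), simplified]])

lemma pt_lin: assumes "f differentiable (at p)" "g differentiable (at p)" "h differentiable (at p)" "k differentiable (at p)"
  shows "pt (\<lambda>q. f q - g q - c * h q - d * k q) p = pt f p - pt g p - c * pt h p - d * pt k p"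
  unfolding pt_def[of "\<lambda>q. f q - g q - c * h q - d * k q"]
  by (intro DERIV_imp_deriv derivative_intros pt_has[OF assms(1), simplified] pt_has[OF assms(2), simplified]
     DERIV_cmult[OF pt_has[OF assms(3), simplified]] DERIV_cmult[OF pt_has[OF assms(4), simplified]])

lemma small_zero: fixes c M e0 :: real assumes "e0 > 0" "\<And>e. 0 < e \<Longrightarrow> e < e0 \<Longrightarrow> \<bar>c\<bar> \<le> M * e"
  shows "c = 0"
proof (rule ccontr)
  assume "c \<noteq> 0"
  define e where "e = min (e0/2) (\<bar>c\<bar> / (2*(\<bar>M\<bar>+1)))"
  have e: "0 < e" "e < e0" using assms \<open>c\<noteq>0\<close> by (auto simp: e_def)
  have "\<bar>c\<bar> \<le> M * e" using assms(2) e by auto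
  also have "\<dots> \<le> \<bar>M\<bar> * e" using e by (simp add: mult_right_mono)
  also have "\<dots> \<le> \<bar>M\<bar> * (\<bar>c\<bar> / (2*(\<bar>M\<bar>+1)))" using e by (intro mult_left_mono) (auto simp: e_def)
  also have "\<dots> < \<bar>c\<bar>" using \<open>c\<noteq>0\<close> by (simp add: field_simps) (smt (verit) abs_ge_zero mult_nonneg_nonneg zero_less_abs_iff)
  finally show False by simp
qed

lemma poly_zero: fixes A B K e0 :: real assumes "e0 > 0" "\<And>e. 0 < e \<Longrightarrow> e < e0 \<Longrightarrow> \<bar>A + e * B\<bar> \<le> K * e^2"
  shows "A = 0 \<and> B = 0"
proof -
  have "A = 0"
  proof (rule small_zero[of "min e0 1" _ "\<bar>K\<bar> + \<bar>B\<bar>"])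
    fix e :: real assume e: "0 < e" "e < min e0 1"
    have t: "\<bar>A\<bar> \<le> \<bar>A + e*B\<bar> + \<bar>e * B\<bar>" by (smt (verit) abs_triangle_ineq4)
    have t2: "\<bar>e * B\<bar> = e * \<bar>B\<bar>" using e by (simp add: abs_mult)
    have h: "\<bar>A\<bar> \<le> K*e^2 + e*\<bar>B\<bar>" using assms(2)[of e] e t t2 by linarith
    have k1: "K*e^2 \<le> \<bar>K\<bar> * e^2" by (intro mult_right_mono) auto
    have "e^2 \<le> e" using e by (simp add: power2_eq_square mult_left_le_one_le)
    hence k2: "\<bar>K\<bar>*e^2 \<le> \<bar>K\<bar> * e" by (intro mult_left_mono) auto
    from k1 k2 have "K*e^2 \<le> \<bar>K\<bar> * e" by linarith
    with h show "\<bar>A\<bar> \<le> (\<bar>K\<bar> + \<bar>B\<bar>) * e" by (simp add: algebra_simps)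
  qed (use assms in auto)
  moreover have "B = 0"
  proof (rule small_zero[of e0 _ K])
    fix e :: real assume e: "0 < e" "e < e0"
    have "e * \<bar>B\<bar> \<le> K * e^2" using assms(2)[OF e] \<open>A = 0\<close> e by (simp add: abs_mult)
    then show "\<bar>B\<bar> \<le> K * e" using e by (simp add: power2_eq_square)
  qed (use assms in auto)
  ultimately show ?thesis by simp
qed



lemma s7: fixes a1 a2 a3 a4 a5 a6 a7 :: real shows "\<bar>a1+a2+a3+a4-a5-a6-a7\<bar> \<le> \<bar>a1\<bar>+\<bar>a2\<bar>+\<bar>a3\<bar>+\<bar>a4\<bar>+\<bar>a5\<bar>+\<bar>a6\<bar>+\<bar>a7\<bar>"
  by (smt (verit))
lemma s3: fixes a1 a2 a3 :: real shows "\<bar>a1+a2-a3\<bar> \<le> \<bar>a1\<bar>+\<bar>a2\<bar>+\<bar>a3\<bar>"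
  by (smt (verit))
lemma pw: fixes e C::real assumes "0<e" "e<1" shows "C*e^3 \<le> \<bar>C\<bar>*e^2" "C*e^4 \<le> \<bar>C\<bar>*e^2" "C*e^2 \<le> \<bar>C\<bar>*e^2"
proof -
  have a: "C*e^n \<le> \<bar>C\<bar>*e^n" for n by (intro mult_right_mono) (use assms in auto)
  have b: "\<bar>C\<bar>*e^n \<le> \<bar>C\<bar>*e^2" if "n \<ge> 2" for n using assms that by (intro mult_left_mono) (auto simp: power_decreasing)
  show "C*e^3 \<le> \<bar>C\<bar>*e^2" using a[of 3] b[of 3] by linarith
  show "C*e^4 \<le> \<bar>C\<bar>*e^2" using a[of 4] b[of 4] by linarith
  show "C*e^2 \<le> \<bar>C\<bar>*e^2" using a[of 2] by linarith
qed

lemma aux1: fixes e :: real assumes e: "0<e" "e<1" and Y: "\<bar>Y\<bar> \<le> C1*e^3" and Z: "\<bar>Z\<bar> \<le> C2*e^3"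
  shows "\<bar>e^2*(P0+e*P1+e^2*P2+Y-G) - e^2*Q - Z\<bar> \<le> (\<bar>P0\<bar>+\<bar>P1\<bar>+\<bar>P2\<bar>+\<bar>C1\<bar>+\<bar>G\<bar>+\<bar>Q\<bar>+\<bar>C2\<bar>)*e^2"
proof -
  have eq: "e^2*(P0+e*P1+e^2*P2+Y-G) - e^2*Q - Z = e^2*P0 + e^3*P1 + e^4*P2 + e^2*Y - e^2*G - e^2*Q - Z"
    by (simp add: algebra_simps eval_nat_numeral)
  have b1: "\<bar>e^2*P0\<bar> = \<bar>P0\<bar>*e^2" "\<bar>e^2*G\<bar> = \<bar>G\<bar>*e^2" "\<bar>e^2*Q\<bar> = \<bar>Q\<bar>*e^2" by (simp_all add: abs_mult)
  have b2: "\<bar>e^3*P1\<bar> \<le> \<bar>P1\<bar>*e^2" using pw(1)[OF e, of "\<bar>P1\<bar>"] e by (simp add: abs_mult mult.commute)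
  have b3: "\<bar>e^4*P2\<bar> \<le> \<bar>P2\<bar>*e^2" using pw(2)[OF e, of "\<bar>P2\<bar>"] e by (simp add: abs_mult mult.commute)
  have y1: "\<bar>Y\<bar> \<le> \<bar>C1\<bar>"
  proof -
    have "\<bar>C1\<bar>*e^2 \<le> \<bar>C1\<bar>" using e by (simp add: mult_left_le power_le_one)
    thus ?thesis using Y pw(1)[OF e, of C1] by linarith
  qed
  have b4: "\<bar>e^2*Y\<bar> \<le> \<bar>C1\<bar>*e^2" using y1 by (simp add: abs_mult mult.commute mult_right_mono)
  have b7: "\<bar>Z\<bar> \<le> \<bar>C2\<bar>*e^2" using Z pw(1)[OF e, of C2] by linarith
  have r: "(\<bar>P0\<bar>+\<bar>P1\<bar>+\<bar>P2\<bar>+\<bar>C1\<bar>+\<bar>G\<bar>+\<bar>Q\<bar>+\<bar>C2\<bar>)*e^2 = \<bar>P0\<bar>*e^2+\<bar>P1\<bar>*e^2+\<bar>P2\<bar>*e^2+\<bar>C1\<bar>*e^2+\<bar>G\<bar>*e^2+\<bar>Q\<bar>*e^2+\<bar>C2\<bar>*e^2"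
    by (simp add: algebra_simps)
  show ?thesis unfolding eq r using s7[of "e^2*P0" "e^3*P1" "e^4*P2" "e^2*Y" "e^2*G" "e^2*Q" Z] b1 b2 b3 b4 b7 by linarith
qed

lemma aux2: fixes e :: real assumes e: "0<e" "e<1" and Y: "\<bar>Y\<bar> \<le> C1*e^3" and Z: "\<bar>Z\<bar> \<le> C2*e^3"
  shows "\<bar>e^2*(P - Q) + Y - Z\<bar> \<le> (\<bar>P\<bar>+\<bar>Q\<bar>+\<bar>C1\<bar>+\<bar>C2\<bar>)*e^2"
proof -
  have b1: "\<bar>e^2*(P - Q)\<bar> \<le> \<bar>P\<bar>*e^2 + \<bar>Q\<bar>*e^2"
  proof -
    have "\<bar>P - Q\<bar> \<le> \<bar>P\<bar> + \<bar>Q\<bar>" by (rule abs_triangle_ineq4)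
    hence "e^2*\<bar>P - Q\<bar> \<le> e^2*(\<bar>P\<bar> + \<bar>Q\<bar>)" by (simp add: mult_left_mono)
    moreover have "\<bar>e^2*(P - Q)\<bar> = e^2*\<bar>P - Q\<bar>" by (simp add: abs_mult)
    moreover have "e^2*(\<bar>P\<bar> + \<bar>Q\<bar>) = \<bar>P\<bar>*e^2 + \<bar>Q\<bar>*e^2" by (simp add: algebra_simps)
    ultimately show ?thesis by linarith
  qed
  have b2: "\<bar>Y\<bar> \<le> \<bar>C1\<bar>*e^2" using Y pw(1)[OF e, of C1] by linarith
  have b3: "\<bar>Z\<bar> \<le> \<bar>C2\<bar>*e^2" using Z pw(1)[OF e, of C2] by linarith
  have r: "(\<bar>P\<bar>+\<bar>Q\<bar>+\<bar>C1\<bar>+\<bar>C2\<bar>)*e^2 = \<bar>P\<bar>*e^2+\<bar>Q\<bar>*e^2+\<bar>C1\<bar>*e^2+\<bar>C2\<bar>*e^2" by (simp add: algebra_simps)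
  show ?thesis unfolding r using s3[of "e^2*(P - Q)" Y Z] b1 b2 b3 by linarith
qed


lemma idA: fixes e :: real assumes "X = e^2*(U - G)" "Z = X - A - e*B - e^2*Q" "Y = U - P0 - e*P1 - e^2*P2"
  shows "A + e*B = e^2*(P0+e*P1+e^2*P2+Y-G) - e^2*Q - Z"
  using assms by (simp add: algebra_simps)
lemma idB: fixes e :: real assumes "X = W" "Z = X - A0 - e*A1 - e^2*A2" "Y = W - B0 - e*B1 - e^2*B2"
  shows "(A0 - B0) + e*(A1 - B1) = e^2*(B2 - A2) + Y - Z"
  using assms by (simp add: algebra_simps)

lemma smooth_diff: "smooth_on S f \<Longrightarrow> p \<in> S \<Longrightarrow> f differentiable (at p)"
  unfolding smooth_on_def by (metis Ck_on.simps(2))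

lemma px_le_grad: "\<bar>px f p\<bar> \<le> grad_norm f p"
  unfolding grad_norm_def by (metis real_sqrt_abs real_sqrt_le_mono le_add_same_cancel1 zero_le_power2)
lemma pt_le_grad: "\<bar>pt f p\<bar> \<le> grad_norm f p"
  unfolding grad_norm_def by (metis real_sqrt_abs real_sqrt_le_mono le_add_same_cancel2 zero_le_power2)

theorem lemma1:
  fixes a b :: real
    and g :: "real \<times> real \<Rightarrow> real"
    and v u :: "real \<Rightarrow> real \<times> real \<Rightarrow> real"
    and v0 v1 v2 u0 u1 u2 :: "real \<times> real \<Rightarrow> real"
  assumes ab: "a < b"
    and smooth_vu: "\<And>\<epsilon>. \<epsilon> > 0 \<Longrightarrow> smooth_on ({a<..<b} \<times> {0<..}) (v \<epsilon>) \<and>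
                                     smooth_on ({a<..<b} \<times> {0<..}) (u \<epsilon>)"
    and cont_vu: "\<And>\<epsilon>. \<epsilon> > 0 \<Longrightarrow> continuous_on ({a..b} \<times> {0<..}) (v \<epsilon>) \<and>
                                   continuous_on ({a..b} \<times> {0<..}) (u \<epsilon>)"
    and eq1: "\<And>\<epsilon> p. \<epsilon> > 0 \<Longrightarrow> p \<in> {a<..<b} \<times> {0<..} \<Longrightarrow> pt (v \<epsilon>) p - px (u \<epsilon>) p = 0"
    and eq2: "\<And>\<epsilon> p. \<epsilon> > 0 \<Longrightarrow> p \<in> {a<..<b} \<times> {0<..} \<Longrightarrow>
                 pt (u \<epsilon>) p - (1 / \<epsilon>\<^sup>2) * px (v \<epsilon>) p = g p"
    and bc: "\<And>\<epsilon> x t. \<epsilon> > 0 \<Longrightarrow> x \<in> {a, b} \<Longrightarrow> t > 0 \<Longrightarrow> v \<epsilon> (x, t) = 0"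
    and smooth_coeffs: "\<forall>f\<in>{v0, v1, v2, u0, u1, u2}. smooth_on ({a<..<b} \<times> {0<..}) f
                              \<and> continuous_on ({a..b} \<times> {0<..}) f"
    and exp_v: "C1_O3 ({a<..<b} \<times> {0<..}) (\<lambda>\<epsilon> p. v \<epsilon> p - v0 p - \<epsilon> * v1 p - \<epsilon>\<^sup>2 * v2 p)"
    and exp_u: "C1_O3 ({a<..<b} \<times> {0<..}) (\<lambda>\<epsilon> p. u \<epsilon> p - u0 p - \<epsilon> * u1 p - \<epsilon>\<^sup>2 * u2 p)"
  shows "(\<forall>p\<in>{a<..<b} \<times> {0<..}. v0 p = 0 \<and> v1 p = 0) \<and>
         (\<forall>x\<in>{a<..<b}. \<forall>y\<in>{a<..<b}. \<forall>t>0. u0 (x, t) = u0 (y, t) \<and> u1 (x, t) = u1 (y, t))"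
proof -
  define \<Omega> where "\<Omega> = {a<..<b} \<times> {(0::real)<..}"
  have sm: "smooth_on \<Omega> v0" "smooth_on \<Omega> v1" "smooth_on \<Omega> v2"
     "smooth_on \<Omega> u0" "smooth_on \<Omega> u1" "smooth_on \<Omega> u2"
    using smooth_coeffs unfolding \<Omega>_def by auto
  have ct: "continuous_on ({a..b} \<times> {0<..}) v0" "continuous_on ({a..b} \<times> {0<..}) v1"
     "continuous_on ({a..b} \<times> {0<..}) v2"
    using smooth_coeffs by auto
  obtain Cv ev0 where ev0: "ev0 > 0" and Bv: "\<And>\<epsilon> p. 0 < \<epsilon> \<Longrightarrow> \<epsilon> < ev0 \<Longrightarrow> p \<in> \<Omega> \<Longrightarrow>
      \<bar>v \<epsilon> p - v0 p - \<epsilon> * v1 p - \<epsilon>\<^sup>2 * v2 p\<bar> \<le> Cv * \<epsilon>^3 \<and>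
      grad_norm (\<lambda>p. v \<epsilon> p - v0 p - \<epsilon> * v1 p - \<epsilon>\<^sup>2 * v2 p) p \<le> Cv * \<epsilon>^3"
    using exp_v unfolding C1_O3_def \<Omega>_def by blast
  obtain Cu eu0 where eu0: "eu0 > 0" and Bu: "\<And>\<epsilon> p. 0 < \<epsilon> \<Longrightarrow> \<epsilon> < eu0 \<Longrightarrow> p \<in> \<Omega> \<Longrightarrow>
      grad_norm (\<lambda>p. u \<epsilon> p - u0 p - \<epsilon> * u1 p - \<epsilon>\<^sup>2 * u2 p) p \<le> Cu * \<epsilon>^3"
    using exp_u unfolding C1_O3_def \<Omega>_def by blast
  define E where "E = min ev0 (min eu0 1)"
  have E: "E > 0" using ev0 eu0 by (simp add: E_def)
  have pxv: "px (\<lambda>q. v \<epsilon> q - v0 q - \<epsilon> * v1 q - \<epsilon>\<^sup>2 * v2 q) p = px (v \<epsilon>) p - px v0 p - \<epsilon> * px v1 p - \<epsilon>\<^sup>2 * px v2 p"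
    "pt (\<lambda>q. v \<epsilon> q - v0 q - \<epsilon> * v1 q - \<epsilon>\<^sup>2 * v2 q) p = pt (v \<epsilon>) p - pt v0 p - \<epsilon> * pt v1 p - \<epsilon>\<^sup>2 * pt v2 p"
    "px (\<lambda>q. u \<epsilon> q - u0 q - \<epsilon> * u1 q - \<epsilon>\<^sup>2 * u2 q) p = px (u \<epsilon>) p - px u0 p - \<epsilon> * px u1 p - \<epsilon>\<^sup>2 * px u2 p"
    "pt (\<lambda>q. u \<epsilon> q - u0 q - \<epsilon> * u1 q - \<epsilon>\<^sup>2 * u2 q) p = pt (u \<epsilon>) p - pt u0 p - \<epsilon> * pt u1 p - \<epsilon>\<^sup>2 * pt u2 p"
    if "\<epsilon> > 0" "p \<in> \<Omega>" for \<epsilon> p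
  proof -
    have sv: "smooth_on \<Omega> (v \<epsilon>)" "smooth_on \<Omega> (u \<epsilon>)" using smooth_vu[OF that(1)] unfolding \<Omega>_def by auto
    note d = smooth_diff[OF sv(1) that(2)] smooth_diff[OF sv(2) that(2)]
      smooth_diff[OF sm(1) that(2)] smooth_diff[OF sm(2) that(2)] smooth_diff[OF sm(3) that(2)]
      smooth_diff[OF sm(4) that(2)] smooth_diff[OF sm(5) that(2)] smooth_diff[OF sm(6) that(2)]
    show "px (\<lambda>q. v \<epsilon> q - v0 q - \<epsilon> * v1 q - \<epsilon>\<^sup>2 * v2 q) p = px (v \<epsilon>) p - px v0 p - \<epsilon> * px v1 p - \<epsilon>\<^sup>2 * px v2 p"
      by (rule px_lin[OF d(1) d(3) d(4) d(5)])
    show "pt (\<lambda>q. v \<epsilon> q - v0 q - \<epsilon> * v1 q - \<epsilon>\<^sup>2 * v2 q) p = pt (v \<epsilon>) p - pt v0 p - \<epsilon> * pt v1 p - \<epsilon>\<^sup>2 * pt v2 p"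
      by (rule pt_lin[OF d(1) d(3) d(4) d(5)])
    show "px (\<lambda>q. u \<epsilon> q - u0 q - \<epsilon> * u1 q - \<epsilon>\<^sup>2 * u2 q) p = px (u \<epsilon>) p - px u0 p - \<epsilon> * px u1 p - \<epsilon>\<^sup>2 * px u2 p"
      by (rule px_lin[OF d(2) d(6) d(7) d(8)])
    show "pt (\<lambda>q. u \<epsilon> q - u0 q - \<epsilon> * u1 q - \<epsilon>\<^sup>2 * u2 q) p = pt (u \<epsilon>) p - pt u0 p - \<epsilon> * pt u1 p - \<epsilon>\<^sup>2 * pt u2 p"
      by (rule pt_lin[OF d(2) d(6) d(7) d(8)])
  qed
  have A: "px v0 p = 0 \<and> px v1 p = 0" if p: "p \<in> \<Omega>" for p
  proof (rule poly_zero[OF E])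
    fix e :: real assume e: "0 < e" "e < E"
    have e1: "e < ev0" "e < eu0" "e < 1" using e by (auto simp: E_def)
    let ?Y = "pt (\<lambda>q. u e q - u0 q - e * u1 q - e\<^sup>2 * u2 q) p"
    let ?Z = "px (\<lambda>q. v e q - v0 q - e * v1 q - e\<^sup>2 * v2 q) p"
    have Y: "\<bar>?Y\<bar> \<le> Cu * e^3" using Bu[OF e(1) e1(2) p] pt_le_grad order_trans by blast
    have Z: "\<bar>?Z\<bar> \<le> Cv * e^3" using Bv[OF e(1) e1(1) p] px_le_grad order_trans by blast
    have q: "px (v e) p = e^2 * (pt (u e) p - g p)"
      using eq2[OF e(1), of p] p e(1) unfolding \<Omega>_def by (simp add: field_simps)
    have eqA: "px v0 p + e * px v1 p = e^2*(pt u0 p + e*pt u1 p + e^2*pt u2 p + ?Y - g p) - e^2 * px v2 p - ?Z"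
      by (rule idA[OF q pxv(1)[OF e(1) p] pxv(4)[OF e(1) p]])
    have bnd: "\<bar>e^2*(pt u0 p + e*pt u1 p + e^2*pt u2 p + ?Y - g p) - e^2 * px v2 p - ?Z\<bar> \<le> (\<bar>pt u0 p\<bar>+\<bar>pt u1 p\<bar>+\<bar>pt u2 p\<bar>+\<bar>Cu\<bar>+\<bar>g p\<bar>+\<bar>px v2 p\<bar>+\<bar>Cv\<bar>)*e^2"
      by (rule aux1[OF e(1) e1(3) Y Z])
    show "\<bar>px v0 p + e * px v1 p\<bar> \<le> (\<bar>pt u0 p\<bar>+\<bar>pt u1 p\<bar>+\<bar>pt u2 p\<bar>+\<bar>Cu\<bar>+\<bar>g p\<bar>+\<bar>px v2 p\<bar>+\<bar>Cv\<bar>)*e^2"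
      by (subst eqA) (rule bnd)
  qed
  have A': "px u0 p = pt v0 p \<and> px u1 p = pt v1 p" if p: "p \<in> \<Omega>" for p
  proof -
    have "px u0 p - pt v0 p = 0 \<and> px u1 p - pt v1 p = 0"
    proof (rule poly_zero[OF E])
      fix e :: real assume e: "0 < e" "e < E"
      have e1: "e < ev0" "e < eu0" "e < 1" using e by (auto simp: E_def)
      let ?Y = "pt (\<lambda>q. v e q - v0 q - e * v1 q - e\<^sup>2 * v2 q) p"
      let ?Z = "px (\<lambda>q. u e q - u0 q - e * u1 q - e\<^sup>2 * u2 q) p"
      have Y: "\<bar>?Y\<bar> \<le> Cv * e^3" using Bv[OF e(1) e1(1) p] pt_le_grad order_trans by blast
      have Z: "\<bar>?Z\<bar> \<le> Cu * e^3" using Bu[OF e(1) e1(2) p] px_le_grad order_trans by blast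
      have q: "px (u e) p = pt (v e) p"
        using eq1[OF e(1), of p] p unfolding \<Omega>_def by simp
      have eqB: "(px u0 p - pt v0 p) + e * (px u1 p - pt v1 p) = e^2*(pt v2 p - px u2 p) + ?Y - ?Z"
        by (rule idB[OF q pxv(3)[OF e(1) p] pxv(2)[OF e(1) p]])
      have bnd: "\<bar>e^2*(pt v2 p - px u2 p) + ?Y - ?Z\<bar> \<le> (\<bar>pt v2 p\<bar>+\<bar>px u2 p\<bar>+\<bar>Cv\<bar>+\<bar>Cu\<bar>)*e^2"
        by (rule aux2[OF e(1) e1(3) Y Z])
      show "\<bar>(px u0 p - pt v0 p) + e * (px u1 p - pt v1 p)\<bar> \<le> (\<bar>pt v2 p\<bar>+\<bar>px u2 p\<bar>+\<bar>Cv\<bar>+\<bar>Cu\<bar>)*e^2"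
        by (subst eqB) (rule bnd)
    qed
    thus ?thesis by simp
  qed
  have B: "v0 (a, t) = 0 \<and> v1 (a, t) = 0" if t: "t > 0" for t
  proof (rule poly_zero[OF E])
    fix e :: real assume e: "0 < e" "e < E"
    have e1: "e < ev0" "e < eu0" "e < 1" using e by (auto simp: E_def)
    define h where "h = (\<lambda>y. v e (y, t) - v0 (y, t) - e * v1 (y, t) - e\<^sup>2 * v2 (y, t))"
    have ch: "continuous_on {a..b} h"
    proof -
      have c: "continuous_on ({a..b} \<times> {0<..}) (\<lambda>q. v e q - v0 q - e * v1 q - e\<^sup>2 * v2 q)"
        using cont_vu[OF e(1)] ct by (intro continuous_intros) auto
      have "continuous_on {a..b} (\<lambda>y. (y, t))" by (intro continuous_intros)
      from continuous_on_compose2[OF c this] t show ?thesis unfolding h_def by auto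
    qed
    have hb0: "\<forall>y\<in>{a<..<b}. norm (h y) \<le> Cv * e^3" using Bv[OF e(1) e1(1)] t unfolding h_def \<Omega>_def by auto
    have "norm (h a) \<le> Cv * e^3"
      by (rule continuous_on_closure_norm_le[of "{a<..<b}" h]) (use ch ab hb0 in auto)
    hence hb: "\<bar>h a\<bar> \<le> Cv * e^3" by simp
    have ha: "h a = - (v0 (a,t) + e * v1 (a,t)) - e^2 * v2 (a,t)"
      unfolding h_def using bc[OF e(1), of a t] t by simp
    have w: "\<bar>v0 (a,t) + e * v1 (a,t)\<bar> \<le> \<bar>Cv\<bar> * e^3 + e^2 * \<bar>v2 (a,t)\<bar>"
    proof -
      have "\<bar>e^2 * v2 (a,t)\<bar> = e^2 * \<bar>v2 (a,t)\<bar>" by (simp add: abs_mult)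
      moreover have "Cv * e^3 \<le> \<bar>Cv\<bar> * e^3" using e by (intro mult_right_mono) auto
      moreover have "\<bar>v0 (a,t) + e * v1 (a,t)\<bar> \<le> \<bar>h a\<bar> + \<bar>e^2 * v2 (a,t)\<bar>"
        using ha by arith
      ultimately show ?thesis using hb by linarith
    qed
    have "\<bar>Cv\<bar> * e^3 \<le> \<bar>Cv\<bar> * e^2" using e e1 by (intro mult_left_mono) (auto simp: power_decreasing)
    moreover have "(\<bar>Cv\<bar> + \<bar>v2 (a,t)\<bar>) * e^2 = \<bar>Cv\<bar> * e^2 + e^2 * \<bar>v2 (a,t)\<bar>" by (simp add: algebra_simps)
    ultimately show "\<bar>v0 (a,t) + e * v1 (a,t)\<bar> \<le> (\<bar>Cv\<bar> + \<bar>v2 (a,t)\<bar>) * e^2" using w by linarith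
  qed
  have C: "v0 (x, t) = 0 \<and> v1 (x, t) = 0" if x: "x \<in> {a<..<b}" and t: "t > 0" for x t
  proof -
    have cc: "continuous_on {a..b} (\<lambda>y. f (y, t))" if "continuous_on ({a..b} \<times> {0<..}) f" for f
    proof -
      have "continuous_on {a..b} (\<lambda>y. (y, t))" by (intro continuous_intros)
      from continuous_on_compose2[OF that this] t show ?thesis by auto
    qed
    have dd: "DERIV (\<lambda>y. f (y, t)) y :> 0" if "smooth_on \<Omega> f" "\<And>p. p \<in> \<Omega> \<Longrightarrow> px f p = 0" "a < y" "y < b" for f y
    proof -
      have "(y,t) \<in> \<Omega>" using that t by (simp add: \<Omega>_def)
      from px_has[OF smooth_diff[OF that(1) this]] that(2)[OF this] show ?thesis by simp
    qed
    have "v0 (x,t) = v0 (a,t)"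
      by (rule DERIV_isconst2[OF ab cc[OF ct(1)] dd[OF sm(1)]]) (use A x in auto)
    moreover have "v1 (x,t) = v1 (a,t)"
      by (rule DERIV_isconst2[OF ab cc[OF ct(2)] dd[OF sm(2)]]) (use A x in auto)
    ultimately show ?thesis using B[OF t] by simp
  qed
  have D: "pt f p = 0" if H: "\<And>x t. x \<in> {a<..<b} \<Longrightarrow> t > 0 \<Longrightarrow> f (x,t) = 0" and P: "p \<in> \<Omega>" for f p
  proof -
    obtain x t where p: "p = (x,t)" "x \<in> {a<..<b}" "t > 0" using P unfolding \<Omega>_def by auto
    have "((\<lambda>s. f (x, s)) has_real_derivative 0) (at t)"
      by (rule has_field_derivative_transform_within_open[OF DERIV_const[of 0 "at t"], where S="{0<..}"])
         (use p H in auto)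
    thus ?thesis unfolding pt_def p by (simp add: DERIV_imp_deriv)
  qed
  have D0: "pt v0 p = 0" "pt v1 p = 0" if "p \<in> \<Omega>" for p
    using D[OF _ that, of v0] D[OF _ that, of v1] C by auto
  have Eu: "f (x,t) = f (y,t)" if "smooth_on \<Omega> f" "\<And>p. p \<in> \<Omega> \<Longrightarrow> px f p = 0"
     "x \<in> {a<..<b}" "y \<in> {a<..<b}" "t > 0" for f x y t
  proof (rule DERIV_isconst3[OF ab that(3,4), of "\<lambda>z. f (z,t)"])
    fix z assume z: "z \<in> {a<..<b}"
    have "(z,t) \<in> \<Omega>" using z that by (simp add: \<Omega>_def)
    from px_has[OF smooth_diff[OF that(1) this]] that(2)[OF this] show "DERIV (\<lambda>z. f (z, t)) z :> 0" by simp
  qed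
  show ?thesis
  proof (intro conjI ballI allI impI)
    fix p assume "p \<in> {a<..<b} \<times> {(0::real)<..}"
    then obtain x t where "p = (x,t)" "x \<in> {a<..<b}" "t > 0" by auto
    then show "v0 p = 0" "v1 p = 0" using C by simp_all
  next
    fix x y t :: real assume "x \<in> {a<..<b}" "y \<in> {a<..<b}" "t > 0"
    note xyt = this
    have hu0: "px u0 p = 0" if "p \<in> \<Omega>" for p using A'[OF that] D0[OF that] by simp
    have hu1: "px u1 p = 0" if "p \<in> \<Omega>" for p using A'[OF that] D0[OF that] by simp
    show "u0 (x, t) = u0 (y, t)" by (rule Eu[OF sm(4) hu0 xyt])
    show "u1 (x, t) = u1 (y, t)" by (rule Eu[OF sm(5) hu1 xyt])
  qed
qed

end
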